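(* Assume the standing assumptions with $L>\mu>0$, and let $x^*$ be a minimizer of $F$. Let $q:=\mu/L$, fix $r\in(\sqrt q,1/\sqrt q)$, set $\alpha:=r\sqrt q$ and $\theta:=(1-r^{-1}\sqrt q)(1-r\sqrt q)(1-q)^{-1}$. Consider the algorithm: $y_1=x_1\in\mathbb R^n$ arbitrary, and for $k\ge1$, $$x_{k+1}:=T_L(y_k)=y_k-L^{-1}\mathcal G_L(y_k),\qquad y_{k+1}:=x_{k+1}+\theta(x_{k+1}-x_k).$$ Then for all $k\ge1$, $$F(x_{k+1})-F(x^* )+\frac{L\alpha^2}{2}\big\|x_{k+1}-x^*+(\alpha^{-1}-1)(x_{k+1}-x_k)\big\|^2\le\Big(1-\min\Big(\frac{\mu}{\alpha L},\alpha\Big)\Big)^k\Big(F(x_1)-F(x^* )+\frac{L\alpha^2}{2}\|x_1-x^*\|^2\Big).$$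
   Context: Standing assumptions: $f:\mathbb R^n\to\mathbb R$ differentiable with $L$-Lipschitz gradient and $\mu$-strongly convex (i.e. $f-\frac\mu2\|\cdot\|^2$ convex); $g:\mathbb R^n\to\mathbb R\cup\{+\infty\}$ proper, closed, convex; $F=f+g$. $T_L(y):=\operatorname{argmin}_x\{g(x)+\langle\nabla f(y),x\rangle+\frac L2\|x-y\|^2\}$, $\mathcal G_L(y):=L(y-T_L(y))$. The right-hand side is $+\infty$ if $x_1\notin\operatorname{dom}g$. *)

theory Defs
  imports "HOL-Analysis.Analysis"
begin

text \<open>The extended-real-valued function g : R^n -> R \<union> {+inf} is represented by
  its effective domain C = dom g together with its (real) values on C.
  g is proper, closed, convex iff C is nonempty and convex, g is convex on C and
  its epigraph is closed.\<close>

definition proper_closed_convex :: "('a::euclidean_space \<Rightarrow> real) \<Rightarrow> 'a set \<Rightarrow> bool" where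
  "proper_closed_convex g C \<longleftrightarrow>
     C \<noteq> {} \<and> convex C \<and> convex_on C g \<and> closed {(x, t). x \<in> C \<and> g x \<le> t}"

definition T_L :: "('a::euclidean_space \<Rightarrow> real) \<Rightarrow> 'a set \<Rightarrow> ('a \<Rightarrow> 'a) \<Rightarrow> real \<Rightarrow> 'a \<Rightarrow> 'a" where
  "T_L g C gradf L y =
     (THE x. x \<in> C \<and> (\<forall>z\<in>C. g x + inner (gradf y) x + L / 2 * (norm (x - y))\<^sup>2
                              \<le> g z + inner (gradf y) z + L / 2 * (norm (z - y))\<^sup>2))"

definition G_L :: "('a::euclidean_space \<Rightarrow> real) \<Rightarrow> 'a set \<Rightarrow> ('a \<Rightarrow> 'a) \<Rightarrow> real \<Rightarrow> 'a \<Rightarrow> 'a" where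
  "G_L g C gradf L y = L *\<^sub>R (y - T_L g C gradf L y)"

end

theory Submission
  imports Defs
begin

lemma deriv_line:
  fixes f :: "'a::real_inner \<Rightarrow> real"
  assumes grad: "\<And>z. GDERIV f z :> gradf z"
  shows "((\<lambda>t. f (y + t *\<^sub>R d)) has_real_derivative inner d (gradf (y + t *\<^sub>R d))) (at t)"
proof -
  have l: "((\<lambda>t. y + t *\<^sub>R d) has_derivative (\<lambda>h. h *\<^sub>R d)) (at t)"
    by (auto intro!: derivative_eq_intros)
  have "((\<lambda>t. f (y + t *\<^sub>R d)) has_derivative (\<lambda>h. inner (h *\<^sub>R d) (gradf (y + t *\<^sub>R d)))) (at t)"
    using has_derivative_compose[OF l grad[unfolded gderiv_def]] .
  moreover have "(\<lambda>h. inner (h *\<^sub>R d) (gradf (y + t *\<^sub>R d))) = (*) (inner d (gradf (y + t *\<^sub>R d)))"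
    by (auto simp: fun_eq_iff)
  ultimately show ?thesis unfolding has_field_derivative_def by simp
qed

lemma descent:
  fixes f :: "'a::real_inner \<Rightarrow> real"
  assumes grad: "\<And>z. GDERIV f z :> gradf z"
    and lip: "\<And>u v. norm (gradf u - gradf v) \<le> L * norm (u - v)"
  shows "f x \<le> f y + inner (gradf y) (x - y) + L / 2 * (norm (x - y))\<^sup>2"
    and "f x \<ge> f y + inner (gradf y) (x - y) - L / 2 * (norm (x - y))\<^sup>2"
proof -
  define d where "d = x - y"
  define h where "h t = f (y + t *\<^sub>R d) - t * inner (gradf y) d - L / 2 * t^2 * (norm d)^2" for t
  define k where "k t = f (y + t *\<^sub>R d) - t * inner (gradf y) d + L / 2 * t^2 * (norm d)^2" for t
  have bnd: "\<bar>inner d (gradf (y + t *\<^sub>R d)) - inner (gradf y) d\<bar> \<le> L * t * (norm d)^2" if "0 \<le> t" for t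
  proof -
    have "\<bar>inner d (gradf (y + t *\<^sub>R d)) - inner (gradf y) d\<bar> = \<bar>inner d (gradf (y + t *\<^sub>R d) - gradf y)\<bar>"
      by (simp add: inner_diff_right inner_commute)
    also have "\<dots> \<le> norm d * norm (gradf (y + t *\<^sub>R d) - gradf y)"
      by (rule Cauchy_Schwarz_ineq2)
    also have "\<dots> \<le> norm d * (L * norm (t *\<^sub>R d))"
      using lip[of "y + t *\<^sub>R d" y] by (intro mult_left_mono) auto
    also have "\<dots> = L * t * (norm d)^2" using that by (simp add: power2_eq_square)
    finally show ?thesis .
  qed
  have dh: "(h has_real_derivative (inner d (gradf (y + t *\<^sub>R d)) - inner (gradf y) d - L * t * (norm d)^2)) (at t)" for t
    unfolding h_def by (auto intro!: derivative_eq_intros deriv_line[OF grad])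
  have dk: "(k has_real_derivative (inner d (gradf (y + t *\<^sub>R d)) - inner (gradf y) d + L * t * (norm d)^2)) (at t)" for t
    unfolding k_def by (auto intro!: derivative_eq_intros deriv_line[OF grad])
  have "h 1 \<le> h 0"
    by (rule DERIV_nonpos_imp_nonincreasing[of 0 1 h]) (use dh bnd in \<open>fastforce simp: abs_le_iff\<close>)+
  then show "f x \<le> f y + inner (gradf y) (x - y) + L / 2 * (norm (x - y))\<^sup>2"
    by (simp add: h_def d_def)
  have "k 0 \<le> k 1"
    by (rule DERIV_nonneg_imp_nondecreasing[of 0 1 k]) (use dk bnd in \<open>fastforce simp: abs_le_iff\<close>)+
  then show "f x \<ge> f y + inner (gradf y) (x - y) - L / 2 * (norm (x - y))\<^sup>2"
    by (simp add: k_def d_def)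
qed

lemma small_t:
  fixes A B K :: real
  assumes "\<And>t. 0 < t \<Longrightarrow> t \<le> 1 \<Longrightarrow> A \<le> B + t * K"
  shows "A \<le> B"
proof (rule ccontr)
  assume "\<not> A \<le> B"
  define t where "t = min 1 ((A - B) / (2 * (\<bar>K\<bar> + 1)))"
  have pos: "0 < t" using \<open>\<not> A \<le> B\<close> by (auto simp: t_def)
  have "t \<le> 1" by (simp add: t_def)
  have "t * K \<le> t * \<bar>K\<bar>" using pos by (intro mult_left_mono) auto
  also have "\<dots> \<le> (A - B) / (2 * (\<bar>K\<bar> + 1)) * \<bar>K\<bar>"
    by (intro mult_right_mono) (auto simp: t_def)
  also have "\<dots> < A - B"
    using \<open>\<not> A \<le> B\<close> mult_strict_right_mono[of B A "\<bar>K\<bar> + 2"]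
    by (simp add: field_simps algebra_simps)
  finally show False using assms[OF pos \<open>t \<le> 1\<close>] by linarith
qed

lemma convex_comb_norm:
  fixes a b :: "'a::real_inner"
  shows "(norm ((1 - t) *\<^sub>R a + t *\<^sub>R b))\<^sup>2 = (1 - t) * (norm a)\<^sup>2 + t * (norm b)\<^sup>2 - t * (1 - t) * (norm (a - b))\<^sup>2"
  by (simp add: power2_norm_eq_inner inner_add_left inner_add_right inner_diff_left inner_diff_right
      inner_commute algebra_simps)

lemma sc_ineq:
  fixes f :: "'a::real_inner \<Rightarrow> real"
  assumes sconv: "convex_on UNIV (\<lambda>z. f z - \<mu> / 2 * (norm z)\<^sup>2)" and t: "0 \<le> t" "t \<le> 1"
  shows "f ((1 - t) *\<^sub>R a + t *\<^sub>R b) \<le> (1 - t) * f a + t * f b - \<mu> / 2 * (t * (1 - t) * (norm (a - b))\<^sup>2)"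
proof -
  have "f ((1 - t) *\<^sub>R a + t *\<^sub>R b) - \<mu> / 2 * (norm ((1 - t) *\<^sub>R a + t *\<^sub>R b))\<^sup>2
      \<le> (1 - t) * (f a - \<mu> / 2 * (norm a)\<^sup>2) + t * (f b - \<mu> / 2 * (norm b)\<^sup>2)"
    using convex_onD[OF sconv t] by simp
  then show ?thesis unfolding convex_comb_norm by (simp add: field_simps)
qed

lemma fo_strong:
  fixes f :: "'a::real_inner \<Rightarrow> real"
  assumes grad: "\<And>z. GDERIV f z :> gradf z"
    and lip: "\<And>u v. norm (gradf u - gradf v) \<le> L * norm (u - v)"
    and sconv: "convex_on UNIV (\<lambda>z. f z - \<mu> / 2 * (norm z)\<^sup>2)"
  shows "f y + inner (gradf y) (z - y) + \<mu> / 2 * (norm (z - y))\<^sup>2 \<le> f z"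
proof -
  define D where "D = (norm (z - y))\<^sup>2"
  have "f y + inner (gradf y) (z - y) + \<mu> / 2 * D \<le> f z + t * ((L + \<mu>) / 2 * D)"
    if t: "0 < t" "t \<le> 1" for t
  proof -
    define w where "w = (1 - t) *\<^sub>R y + t *\<^sub>R z"
    have wy: "w - y = t *\<^sub>R (z - y)" by (simp add: w_def algebra_simps)
    have "f w \<le> (1 - t) * f y + t * f z - \<mu> / 2 * (t * (1 - t) * D)"
      unfolding w_def D_def using sc_ineq[OF sconv, of t y z] t by (simp add: norm_minus_commute)
    moreover have "f w \<ge> f y + inner (gradf y) (w - y) - L / 2 * (norm (w - y))\<^sup>2"
      by (rule descent(2)[OF grad lip])
    moreover have "inner (gradf y) (w - y) = t * inner (gradf y) (z - y)" by (simp add: wy)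
    moreover have "(norm (w - y))\<^sup>2 = t^2 * D" by (simp add: wy D_def power_mult_distrib)
    ultimately have "t * (f y + inner (gradf y) (z - y) + \<mu> / 2 * D) \<le> t * (f z + t * ((L + \<mu>) / 2 * D))"
      by (simp add: field_simps power2_eq_square)
    then show ?thesis using t by simp
  qed
  then show ?thesis unfolding D_def by (rule small_t)
qed

lemma affine_minor:
  fixes f g :: "'a::real_inner \<Rightarrow> real"
  assumes grad: "\<And>z. GDERIV f z :> gradf z"
    and lip: "\<And>u v. norm (gradf u - gradf v) \<le> L * norm (u - v)"
    and gconv: "convex_on C g" and Cc: "convex C"
    and xs: "xs \<in> C" "\<And>z. z \<in> C \<Longrightarrow> f xs + g xs \<le> f z + g z"
    and z: "z \<in> C"
  shows "g xs - inner (gradf xs) (z - xs) \<le> g z"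
proof -
  define D where "D = (norm (z - xs))\<^sup>2"
  have "g xs - inner (gradf xs) (z - xs) \<le> g z + t * (L / 2 * D)"
    if t: "0 < t" "t \<le> 1" for t
  proof -
    define w where "w = (1 - t) *\<^sub>R xs + t *\<^sub>R z"
    have wy: "w - xs = t *\<^sub>R (z - xs)" by (simp add: w_def algebra_simps)
    have wC: "w \<in> C" unfolding w_def using Cc xs(1) z t by (intro convexD) auto
    have "g w \<le> (1 - t) * g xs + t * g z"
      unfolding w_def using convex_onD[OF gconv, of t xs z] t xs z by simp
    moreover have "f w \<le> f xs + inner (gradf xs) (w - xs) + L / 2 * (norm (w - xs))\<^sup>2"
      by (rule descent(1)[OF grad lip])
    moreover have "inner (gradf xs) (w - xs) = t * inner (gradf xs) (z - xs)" by (simp add: wy)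
    moreover have "(norm (w - xs))\<^sup>2 = t^2 * D" by (simp add: wy D_def power_mult_distrib)
    moreover have "f xs + g xs \<le> f w + g w" using xs(2)[OF wC] .
    ultimately have "t * (g xs - inner (gradf xs) (z - xs)) \<le> t * (g z + t * (L / 2 * D))"
      by (simp add: field_simps power2_eq_square)
    then show ?thesis using t by simp
  qed
  then show ?thesis by (rule small_t)
qed

lemma three_point:
  fixes g :: "'a::real_inner \<Rightarrow> real"
  assumes gconv: "convex_on C g" and Cc: "convex C"
    and x: "x \<in> C" "\<And>z. z \<in> C \<Longrightarrow> g x + inner v x + L / 2 * (norm (x - y))\<^sup>2
                              \<le> g z + inner v z + L / 2 * (norm (z - y))\<^sup>2"
    and z: "z \<in> C"
  shows "g x + inner v x + L / 2 * (norm (x - y))\<^sup>2 + L / 2 * (norm (z - x))\<^sup>2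
         \<le> g z + inner v z + L / 2 * (norm (z - y))\<^sup>2"
proof -
  define D where "D = (norm (z - x))\<^sup>2"
  define \<phi> where "\<phi> w = g w + inner v w + L / 2 * (norm (w - y))\<^sup>2" for w
  have "\<phi> x + L / 2 * D \<le> \<phi> z + t * (L / 2 * D)"
    if t: "0 < t" "t \<le> 1" for t
  proof -
    define w where "w = (1 - t) *\<^sub>R x + t *\<^sub>R z"
    have wy: "w - y = (1 - t) *\<^sub>R (x - y) + t *\<^sub>R (z - y)" by (simp add: w_def algebra_simps)
    have wC: "w \<in> C" unfolding w_def using Cc x(1) z t by (intro convexD) auto
    have "g w \<le> (1 - t) * g x + t * g z"
      unfolding w_def using convex_onD[OF gconv, of t x z] t x z by simp
    moreover have "inner v w = (1 - t) * inner v x + t * inner v z"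
      by (simp add: w_def inner_add_right)
    moreover have "L / 2 * (norm (w - y))\<^sup>2 = (1 - t) * (L / 2 * (norm (x - y))\<^sup>2) + t * (L / 2 * (norm (z - y))\<^sup>2) - t * (1 - t) * (L / 2 * D)"
      unfolding wy convex_comb_norm by (simp add: D_def norm_minus_commute field_simps)
    moreover have "\<phi> x \<le> \<phi> w" using x(2)[OF wC] by (simp add: \<phi>_def)
    ultimately have "t * (\<phi> x + L / 2 * D) \<le> t * (\<phi> z + t * (L / 2 * D))"
      unfolding \<phi>_def by (simp add: field_simps)
    then show ?thesis using t by simp
  qed
  then show ?thesis unfolding \<phi>_def D_def by (rule small_t)
qed

lemma prox_exists:
  fixes g :: "'a::euclidean_space \<Rightarrow> real"
  assumes ne: "x0 \<in> C" and cl: "closed {(x, t). x \<in> C \<and> g x \<le> t}"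
    and minor: "\<And>z. z \<in> C \<Longrightarrow> a + inner b z \<le> g z"
    and L: "L > 0"
  shows "\<exists>x\<in>C. \<forall>z\<in>C. g x + inner v x + L / 2 * (norm (x - y))\<^sup>2 \<le> g z + inner v z + L / 2 * (norm (z - y))\<^sup>2"
proof -
  define \<psi> where "\<psi> w = inner v w + L / 2 * (norm (w - y))\<^sup>2" for w
  define c where "c = g x0 + \<psi> x0"
  define S where "S = {(x, t). x \<in> C \<and> g x \<le> t} \<inter> {p. snd p + \<psi> (fst p) \<le> c}"
  define V where "V = norm (b + v)"
  define K where "K = \<bar>c - a - inner (b + v) y\<bar>"
  define R where "R = 1 + 2 * (K + V) / L"
  define W where "W = norm y + R"
  have V0: "V \<ge> 0" "K \<ge> 0" by (auto simp: V_def K_def)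
  have Sbd: "norm (w - y) \<le> R \<and> a - norm b * W \<le> t \<and> t \<le> c + norm v * W" if "(w, t) \<in> S" for w t
  proof -
    from that have wC: "w \<in> C" and gt: "g w \<le> t" and tc: "t + \<psi> w \<le> c" by (auto simp: S_def)
    have m: "a + inner b w \<le> g w" using minor[OF wC] .
    define u where "u = w - y"
    have wu: "w = y + u" by (simp add: u_def)
    have iw: "inner (b + v) w = inner (b + v) y + inner (b + v) u" by (simp add: wu inner_add_right)
    have "inner (b + v) u \<ge> - (V * norm u)"
      using Cauchy_Schwarz_ineq2[of "b + v" u] by (simp add: V_def abs_le_iff)
    have "a + inner b w + inner v w + L / 2 * (norm u)\<^sup>2 \<le> c"
      using m gt tc by (simp add: \<psi>_def u_def)
    then have "L / 2 * (norm u)\<^sup>2 \<le> c - a - inner (b + v) w"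
      by (simp add: inner_add_left)
    also have "\<dots> \<le> K + V * norm u"
      using iw \<open>inner (b + v) u \<ge> - (V * norm u)\<close> by (simp add: K_def)
    finally have q: "L / 2 * (norm u)\<^sup>2 \<le> K + V * norm u" .
    have nu: "norm u \<le> R"
    proof (cases "norm u \<le> 1")
      case True
      have "0 \<le> 2 * (K + V) / L" using V0 L by simp
      then show ?thesis using True by (simp add: R_def)
    next
      case False
      then have "K * 1 \<le> K * norm u" using V0 by (intro mult_left_mono) auto
      then have "K + V * norm u \<le> (K + V) * norm u"
        by (simp add: algebra_simps)
      with q have "(L / 2 * norm u) * norm u \<le> (K + V) * norm u" by (simp add: power2_eq_square)
      then have "L / 2 * norm u \<le> K + V"
        using mult_right_le_imp_le[of "L / 2 * norm u" "norm u" "K + V"] False by fastforce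
      then have "norm u \<le> 2 * (K + V) / L" using L by (simp add: field_simps)
      then show ?thesis by (simp add: R_def)
    qed
    have nw: "norm w \<le> W" unfolding W_def using nu norm_triangle_ineq[of y u] wu by simp
    have "- inner b w \<le> norm b * W"
      using Cauchy_Schwarz_ineq2[of b w] nw
      by (smt (verit) mult_left_mono norm_ge_zero)
    have "- inner v w \<le> norm v * W"
      using Cauchy_Schwarz_ineq2[of v w] nw
      by (smt (verit) mult_left_mono norm_ge_zero)
    have "0 \<le> L / 2 * (norm (w - y))\<^sup>2" using L by simp
    then have "t \<le> c - inner v w" using tc unfolding \<psi>_def by linarith
    show ?thesis using nu \<open>- inner b w \<le> norm b * W\<close> \<open>- inner v w \<le> norm v * W\<close> m gt
      \<open>t \<le> c - inner v w\<close> by (simp add: u_def)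
  qed
  have "S \<subseteq> cball y R \<times> {a - norm b * W .. c + norm v * W}"
    using Sbd by (auto simp: dist_norm norm_minus_commute)
  then have bS: "bounded S"
    by (rule bounded_subset[rotated]) (intro bounded_Times bounded_cball bounded_closed_interval)
  have cS: "closed S" unfolding S_def
    by (intro closed_Int cl closed_Collect_le) (auto simp: \<psi>_def intro!: continuous_intros)
  have x0S: "(x0, g x0) \<in> S" using ne by (simp add: S_def c_def)
  have cont: "continuous_on S (\<lambda>p. snd p + \<psi> (fst p))"
    unfolding \<psi>_def by (intro continuous_intros)
  have "compact S" using bS cS by (simp add: compact_eq_bounded_closed)
  then obtain p where pS: "p \<in> S" and pmin: "\<forall>q\<in>S. snd p + \<psi> (fst p) \<le> snd q + \<psi> (fst q)"
    using continuous_attains_inf[of S "\<lambda>p. snd p + \<psi> (fst p)"] cont x0S by blast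
  obtain x1 t1 where p: "p = (x1, t1)" by (cases p)
  have x1C: "x1 \<in> C" and gx1: "g x1 \<le> t1" and x1c: "t1 + \<psi> x1 \<le> c" using pS by (auto simp: p S_def)
  show ?thesis
  proof (intro bexI[OF _ x1C] ballI)
    fix z assume zC: "z \<in> C"
    show "g x1 + inner v x1 + L / 2 * (norm (x1 - y))\<^sup>2 \<le> g z + inner v z + L / 2 * (norm (z - y))\<^sup>2"
    proof (cases "g z + \<psi> z \<le> c")
      case True
      then have "(z, g z) \<in> S" using zC by (simp add: S_def)
      then have "t1 + \<psi> x1 \<le> g z + \<psi> z" using pmin p by force
      then show ?thesis using gx1 by (simp add: \<psi>_def)
    next
      case False
      then show ?thesis using gx1 x1c by (simp add: \<psi>_def)
    qed
  qed
qed

lemma sq_comb: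
  fixes u v :: "'a::real_inner"
  shows "(norm (a *\<^sub>R u + b *\<^sub>R v))\<^sup>2 = a^2 * (norm u)\<^sup>2 + 2 * a * b * inner u v + b^2 * (norm v)\<^sup>2"
  unfolding power2_norm_eq_inner by (simp add: inner_add_left inner_add_right inner_commute algebra_simps power2_eq_square)

lemma scalar_quad:
  fixes L q \<alpha> \<theta> \<beta> E D P :: real
  assumes hb: "\<beta> * \<alpha> = \<alpha> - q" and ht: "\<theta> * (1 - q) = \<beta> * (1 - \<alpha>)"
    and pos: "L \<ge> 0" "\<beta> \<ge> 0" "\<alpha> \<le> 1" "\<theta> \<le> 1 - \<alpha>" "D \<ge> 0"
  shows "L / 2 * (1 - q) * (\<alpha>^2 * E + 2 * \<alpha> * \<theta> * P + \<theta>^2 * D) - L / 2 * q * (\<alpha> * (1 - \<alpha>) * E)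
       \<le> \<beta> * (L / 2 * (\<alpha>^2 * E + 2 * \<alpha> * (1 - \<alpha>) * P + (1 - \<alpha>)^2 * D))"
proof -
  have z1: "\<beta> * \<alpha> - \<alpha> + q = 0" using hb by simp
  have z2: "\<beta> * (1 - \<alpha>) - (1 - q) * \<theta> = 0" using ht by (simp add: mult.commute)
  have id: "\<beta> * (L / 2 * (\<alpha>^2 * E + 2 * \<alpha> * (1 - \<alpha>) * P + (1 - \<alpha>)^2 * D))
     - (L / 2 * (1 - q) * (\<alpha>^2 * E + 2 * \<alpha> * \<theta> * P + \<theta>^2 * D) - L / 2 * q * (\<alpha> * (1 - \<alpha>) * E))
     = L / 2 * \<beta> * (1 - \<alpha>) * (1 - \<alpha> - \<theta>) * D
       + L / 2 * (\<alpha> * (\<beta> * \<alpha> - \<alpha> + q) * E + 2 * \<alpha> * (\<beta> * (1 - \<alpha>) - (1 - q) * \<theta>) * P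
                  + \<theta> * (\<beta> * (1 - \<alpha>) - (1 - q) * \<theta>) * D)"
    by (simp add: field_simps power2_eq_square)
  have "0 \<le> L / 2 * \<beta> * (1 - \<alpha>) * (1 - \<alpha> - \<theta>) * D"
    using pos by (intro mult_nonneg_nonneg) auto
  then show ?thesis using id unfolding z1 z2 by simp
qed

lemma TL_prop:
  fixes g :: "'a::euclidean_space \<Rightarrow> real"
  assumes gpcc: "proper_closed_convex g C" and L: "L > 0"
    and minor: "\<And>z. z \<in> C \<Longrightarrow> a + inner b z \<le> g z"
  shows "T_L g C gradf L y \<in> C \<and> (\<forall>z\<in>C. g (T_L g C gradf L y) + inner (gradf y) (T_L g C gradf L y)
            + L / 2 * (norm (T_L g C gradf L y - y))\<^sup>2 \<le> g z + inner (gradf y) z + L / 2 * (norm (z - y))\<^sup>2)"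
proof -
  from gpcc have ne: "C \<noteq> {}" and Cc: "convex C" and gc: "convex_on C g"
    and cl: "closed {(x, t). x \<in> C \<and> g x \<le> t}" by (auto simp: proper_closed_convex_def)
  obtain x0 where x0: "x0 \<in> C" using ne by blast
  let ?P = "\<lambda>x. x \<in> C \<and> (\<forall>z\<in>C. g x + inner (gradf y) x + L / 2 * (norm (x - y))\<^sup>2
                              \<le> g z + inner (gradf y) z + L / 2 * (norm (z - y))\<^sup>2)"
  obtain x where Px: "?P x" using prox_exists[OF x0 cl minor L, of "gradf y" y] by blast
  have "x' = x" if "?P x'" for x'
  proof -
    have "g x + inner (gradf y) x + L / 2 * (norm (x - y))\<^sup>2 + L / 2 * (norm (x' - x))\<^sup>2
         \<le> g x' + inner (gradf y) x' + L / 2 * (norm (x' - y))\<^sup>2"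
      using three_point[OF gc Cc, of x "gradf y" L y x'] Px that by blast
    moreover have "g x' + inner (gradf y) x' + L / 2 * (norm (x' - y))\<^sup>2
         \<le> g x + inner (gradf y) x + L / 2 * (norm (x - y))\<^sup>2" using that Px by blast
    ultimately have "L / 2 * (norm (x' - x))\<^sup>2 \<le> 0" by linarith
    then have "(norm (x' - x))\<^sup>2 \<le> 0" using L by (simp add: mult_le_0_iff)
    then show ?thesis by simp
  qed
  then have "\<exists>!x. ?P x" using Px by blast
  from theI'[OF this] show ?thesis unfolding T_L_def .
qed

lemma key_ineq:
  fixes f g :: "'a::euclidean_space \<Rightarrow> real"
  assumes grad: "\<And>z. GDERIV f z :> gradf z"
    and lip: "\<And>u v. norm (gradf u - gradf v) \<le> L * norm (u - v)"
    and sconv: "convex_on UNIV (\<lambda>z. f z - \<mu> / 2 * (norm z)\<^sup>2)"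
    and gpcc: "proper_closed_convex g C" and L: "L > 0"
    and minor: "\<And>z. z \<in> C \<Longrightarrow> a + inner b z \<le> g z"
    and z: "z \<in> C"
  shows "f (T_L g C gradf L y) + g (T_L g C gradf L y)
     \<le> f z + g z + (L - \<mu>) / 2 * (norm (z - y))\<^sup>2 - L / 2 * (norm (z - T_L g C gradf L y))\<^sup>2"
proof -
  define xn where "xn = T_L g C gradf L y"
  from gpcc have Cc: "convex C" and gc: "convex_on C g" by (auto simp: proper_closed_convex_def)
  have P: "xn \<in> C \<and> (\<forall>z\<in>C. g xn + inner (gradf y) xn + L / 2 * (norm (xn - y))\<^sup>2
            \<le> g z + inner (gradf y) z + L / 2 * (norm (z - y))\<^sup>2)"
    unfolding xn_def by (rule TL_prop[OF gpcc L minor])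
  have tp: "g xn + inner (gradf y) xn + L / 2 * (norm (xn - y))\<^sup>2 + L / 2 * (norm (z - xn))\<^sup>2
         \<le> g z + inner (gradf y) z + L / 2 * (norm (z - y))\<^sup>2"
    using three_point[OF gc Cc, of xn "gradf y" L y z] P z by blast
  have d: "f xn \<le> f y + inner (gradf y) (xn - y) + L / 2 * (norm (xn - y))\<^sup>2"
    by (rule descent(1)[OF grad lip])
  have s: "f y + inner (gradf y) (z - y) + \<mu> / 2 * (norm (z - y))\<^sup>2 \<le> f z"
    by (rule fo_strong[OF grad lip sconv])
  have "(L - \<mu>) / 2 * (norm (z - y))\<^sup>2 = L / 2 * (norm (z - y))\<^sup>2 - \<mu> / 2 * (norm (z - y))\<^sup>2"
    by (simp add: field_simps)
  then show ?thesis using tp d s unfolding xn_def[symmetric]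
    by (simp add: inner_diff_right field_simps)
qed

lemma step:
  fixes f g :: "'a::euclidean_space \<Rightarrow> real"
  assumes grad: "\<And>z. GDERIV f z :> gradf z"
    and lip: "\<And>u v. norm (gradf u - gradf v) \<le> L * norm (u - v)"
    and sconv: "convex_on UNIV (\<lambda>z. f z - \<mu> / 2 * (norm z)\<^sup>2)"
    and gpcc: "proper_closed_convex g C" and L: "L > 0"
    and minor: "\<And>z. z \<in> C \<Longrightarrow> ca + inner cb z \<le> g z"
    and xs: "xs \<in> C" "\<And>z. z \<in> C \<Longrightarrow> f xs + g xs \<le> f z + g z"
    and q: "q = \<mu> / L" and al: "0 < \<alpha>" "\<alpha> \<le> 1" "q \<le> \<alpha>"
    and th: "\<theta> * (1 - q) = (1 - q / \<alpha>) * (1 - \<alpha>)" "\<theta> \<le> 1 - \<alpha>"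
    and rho: "\<rho> \<le> \<alpha>" "\<rho> \<le> q / \<alpha>"
    and aC: "a \<in> C" and yy: "yy = a + \<theta> *\<^sub>R (a - p)" and xn: "xn = T_L g C gradf L yy"
  shows "f xn + g xn - (f xs + g xs) + L * \<alpha>^2 / 2 * (norm (xn - xs + (1 / \<alpha> - 1) *\<^sub>R (xn - a)))\<^sup>2
     \<le> (1 - \<rho>) * (f a + g a - (f xs + g xs) + L * \<alpha>^2 / 2 * (norm (a - xs + (1 / \<alpha> - 1) *\<^sub>R (a - p)))\<^sup>2)"
proof -
  from gpcc have Cc: "convex C" and gc: "convex_on C g" by (auto simp: proper_closed_convex_def)
  define z where "z = (1 - \<alpha>) *\<^sub>R a + \<alpha> *\<^sub>R xs"
  define e where "e = a - xs"
  define d where "d = a - p"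
  define E where "E = (norm e)\<^sup>2"
  define D where "D = (norm d)\<^sup>2"
  define P where "P = inner e d"
  define \<beta> where "\<beta> = 1 - q / \<alpha>"
  define Fs where "Fs = f xs + g xs"
  have zC: "z \<in> C" unfolding z_def using Cc aC xs(1) al by (intro convexD) auto
  have K: "f xn + g xn \<le> f z + g z + (L - \<mu>) / 2 * (norm (z - yy))\<^sup>2 - L / 2 * (norm (z - xn))\<^sup>2"
    unfolding xn by (rule key_ineq[OF grad lip sconv gpcc L minor zC])
  have fz: "f z \<le> (1 - \<alpha>) * f a + \<alpha> * f xs - \<mu> / 2 * (\<alpha> * (1 - \<alpha>) * E)"
    unfolding z_def E_def e_def using sc_ineq[OF sconv, of \<alpha> a xs] al by simp
  have gz: "g z \<le> (1 - \<alpha>) * g a + \<alpha> * g xs"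
    unfolding z_def using convex_onD[OF gc, of \<alpha> a xs] al aC xs(1) by simp
  have id1: "xn - xs + (1 / \<alpha> - 1) *\<^sub>R (xn - a) = (1 / \<alpha>) *\<^sub>R (xn - z)"
    using al by (simp add: z_def algebra_simps)
  have n1: "L * \<alpha>^2 / 2 * (norm (xn - xs + (1 / \<alpha> - 1) *\<^sub>R (xn - a)))\<^sup>2 = L / 2 * (norm (z - xn))\<^sup>2"
    unfolding id1 norm_scaleR using al by (simp add: power_mult_distrib norm_minus_commute field_simps)
  have id2: "a - xs + (1 / \<alpha> - 1) *\<^sub>R (a - p) = (1 / \<alpha>) *\<^sub>R (\<alpha> *\<^sub>R e + (1 - \<alpha>) *\<^sub>R d)"
    using al by (simp add: e_def d_def algebra_simps)
  have n2: "L * \<alpha>^2 / 2 * (norm (a - xs + (1 / \<alpha> - 1) *\<^sub>R (a - p)))\<^sup>2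
      = L / 2 * (\<alpha>^2 * E + 2 * \<alpha> * (1 - \<alpha>) * P + (1 - \<alpha>)^2 * D)"
    unfolding id2 norm_scaleR power_mult_distrib sq_comb using al by (simp add: E_def D_def P_def field_simps)
  have id3: "z - yy = (- \<alpha>) *\<^sub>R e + (- \<theta>) *\<^sub>R d"
    by (simp add: z_def yy e_def d_def algebra_simps)
  have n3: "(norm (z - yy))\<^sup>2 = \<alpha>^2 * E + 2 * \<alpha> * \<theta> * P + \<theta>^2 * D"
    unfolding id3 sq_comb by (simp add: E_def D_def P_def)
  have hb: "\<beta> * \<alpha> = \<alpha> - q" using al by (simp add: \<beta>_def field_simps)
  have b0: "\<beta> \<ge> 0" using al by (simp add: \<beta>_def field_simps)
  have sq: "L / 2 * (1 - q) * (\<alpha>^2 * E + 2 * \<alpha> * \<theta> * P + \<theta>^2 * D) - L / 2 * q * (\<alpha> * (1 - \<alpha>) * E)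
       \<le> \<beta> * (L / 2 * (\<alpha>^2 * E + 2 * \<alpha> * (1 - \<alpha>) * P + (1 - \<alpha>)^2 * D))"
    by (rule scalar_quad[OF hb th(1)[folded \<beta>_def]]) (use L b0 al th in \<open>auto simp: D_def\<close>)
  have mu: "\<mu> = q * L" using q L by simp
  define Q where "Q = L / 2 * (\<alpha>^2 * E + 2 * \<alpha> * (1 - \<alpha>) * P + (1 - \<alpha>)^2 * D)"
  have Q0: "Q \<ge> 0" unfolding Q_def n2[symmetric] using L by simp
  have Fa: "f a + g a - Fs \<ge> 0" using xs(2)[OF aC] by (simp add: Fs_def)
  define A where "A = (L - \<mu>) / 2 * (norm (z - yy))\<^sup>2"
  define B where "B = \<mu> / 2 * (\<alpha> * (1 - \<alpha>) * E)"
  define N where "N = L / 2 * (norm (z - xn))\<^sup>2"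
  define Q\<theta> where "Q\<theta> = L / 2 * (1 - q) * (\<alpha>^2 * E + 2 * \<alpha> * \<theta> * P + \<theta>^2 * D)"
  define Bq where "Bq = L / 2 * q * (\<alpha> * (1 - \<alpha>) * E)"
  have AQ: "A = Q\<theta>" unfolding A_def Q\<theta>_def n3 mu by (simp add: field_simps)
  have BB: "B = Bq" unfolding B_def Bq_def mu by (simp add: field_simps)
  have K': "f xn + g xn \<le> f z + g z + A - N" using K by (simp add: A_def N_def)
  have fz': "f z \<le> (1 - \<alpha>) * f a + \<alpha> * f xs - B" using fz by (simp add: B_def)
  have sq': "Q\<theta> - Bq \<le> \<beta> * Q" using sq by (simp add: Q\<theta>_def Bq_def Q_def)
  have main: "f xn + g xn - Fs + N \<le> (1 - \<alpha>) * (f a + g a - Fs) + \<beta> * Q"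
    using K' fz' gz sq' AQ BB by (simp add: Fs_def algebra_simps)
  have r1: "(1 - \<alpha>) * (f a + g a - Fs) \<le> (1 - \<rho>) * (f a + g a - Fs)"
    using Fa rho by (intro mult_right_mono) auto
  have r2: "\<beta> * Q \<le> (1 - \<rho>) * Q"
    using Q0 rho by (intro mult_right_mono) (auto simp: \<beta>_def)
  show ?thesis using main r1 r2 unfolding n1 n2 Q_def[symmetric] Fs_def[symmetric] N_def[symmetric]
    by (simp add: algebra_simps)
qed

theorem mainTheorem14:
  fixes f g :: "'a::euclidean_space \<Rightarrow> real" and C :: "'a set"
    and gradf :: "'a \<Rightarrow> 'a" and L \<mu> r :: real
    and xstar :: 'a and x y :: "nat \<Rightarrow> 'a"
  assumes grad: "\<And>z. GDERIV f z :> gradf z"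
    and lip: "\<And>u v. norm (gradf u - gradf v) \<le> L * norm (u - v)"
    and sconv: "convex_on UNIV (\<lambda>z. f z - \<mu> / 2 * (norm z)\<^sup>2)"
    and gpcc: "proper_closed_convex g C"
    and Lmu: "L > \<mu>" "\<mu> > 0"
    and xstar: "xstar \<in> C" "\<And>z. z \<in> C \<Longrightarrow> f xstar + g xstar \<le> f z + g z"
    and r: "sqrt (\<mu> / L) < r" "r < 1 / sqrt (\<mu> / L)"
    and y1: "y 1 = x 1"
    and xstep: "\<And>k. k \<ge> 1 \<Longrightarrow> x (k + 1) = y k - (1 / L) *\<^sub>R G_L g C gradf L (y k)"
    and ystep: "\<And>k. k \<ge> 1 \<Longrightarrow>
       y (k + 1) = x (k + 1) + ((1 - sqrt (\<mu> / L) / r) * (1 - r * sqrt (\<mu> / L)) / (1 - \<mu> / L))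
                               *\<^sub>R (x (k + 1) - x k)"
    and x1: "x 1 \<in> C"
  shows "\<forall>k\<ge>1.
     (f (x (k + 1)) + g (x (k + 1))) - (f xstar + g xstar)
       + L * (r * sqrt (\<mu> / L))\<^sup>2 / 2
         * (norm (x (k + 1) - xstar + (1 / (r * sqrt (\<mu> / L)) - 1) *\<^sub>R (x (k + 1) - x k)))\<^sup>2
     \<le> (1 - min (\<mu> / ((r * sqrt (\<mu> / L)) * L)) (r * sqrt (\<mu> / L))) ^ k
       * ((f (x 1) + g (x 1)) - (f xstar + g xstar)
          + L * (r * sqrt (\<mu> / L))\<^sup>2 / 2 * (norm (x 1 - xstar))\<^sup>2)"
proof -
  have L: "L > 0" using Lmu by linarith
  define q where "q = \<mu> / L"
  define s where "s = sqrt (\<mu> / L)"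
  define \<alpha> where "\<alpha> = r * sqrt (\<mu> / L)"
  define \<theta> where "\<theta> = (1 - sqrt (\<mu> / L) / r) * (1 - r * sqrt (\<mu> / L)) / (1 - \<mu> / L)"
  define \<rho> where "\<rho> = min (\<mu> / (\<alpha> * L)) \<alpha>"
  define Fs where "Fs = f xstar + g xstar"
  define T where "T = T_L g C gradf L"
  have q0: "0 < q" "q < 1" using Lmu L by (auto simp: q_def field_simps)
  have s0: "s > 0" using q0 by (simp add: s_def q_def[symmetric])
  have ss: "s * s = q" using q0 by (simp add: s_def q_def[symmetric])
  have rs: "s < r" "r < 1 / s" using r by (simp_all add: s_def)
  have r0: "r > 0" using rs s0 by linarith
  have al: "\<alpha> = r * s" by (simp add: \<alpha>_def s_def)
  have aq: "q < \<alpha>" unfolding al ss[symmetric] using rs s0 by (intro mult_strict_right_mono) auto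
  have a1: "\<alpha> < 1" unfolding al using rs s0 by (simp add: field_simps)
  have a0: "0 < \<alpha>" using aq q0 by linarith
  have sr: "s / r = q / \<alpha>" unfolding al ss[symmetric] using s0 r0 by (simp add: field_simps)
  have th: "\<theta> * (1 - q) = (1 - q / \<alpha>) * (1 - \<alpha>)"
  proof -
    have "\<theta> = (1 - s / r) * (1 - r * s) / (1 - q)" by (simp add: \<theta>_def s_def q_def)
    then show ?thesis unfolding sr al[symmetric] using q0 by simp
  qed
  have "q / \<alpha> \<ge> q" using a0 a1 q0 by (simp add: field_simps)
  then have "1 - q / \<alpha> \<le> 1 - q" by linarith
  then have "(1 - q / \<alpha>) * (1 - \<alpha>) \<le> (1 - q) * (1 - \<alpha>)" using a1 by (intro mult_right_mono) auto
  then have "\<theta> * (1 - q) \<le> (1 - \<alpha>) * (1 - q)" using th by (simp add: mult.commute)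
  then have th2: "\<theta> \<le> 1 - \<alpha>" using q0 by (simp add: mult_le_cancel_right)
  have "\<mu> / (\<alpha> * L) = q / \<alpha>" by (simp add: q_def field_simps)
  then have rho: "\<rho> \<le> \<alpha>" "\<rho> \<le> q / \<alpha>" by (auto simp: \<rho>_def)
  have rho1: "0 \<le> 1 - \<rho>" using rho a1 by linarith
  have minor: "\<And>z. z \<in> C \<Longrightarrow> (g xstar + inner (gradf xstar) xstar) + inner (- gradf xstar) z \<le> g z"
    using affine_minor[OF grad lip _ _ xstar] gpcc
    by (fastforce simp: proper_closed_convex_def inner_diff_right)
  have xT: "x (k + 1) = T (y k)" if "k \<ge> 1" for k
    using xstep[OF that] L by (simp add: G_L_def T_def)
  have TC: "T w \<in> C" for w using TL_prop[OF gpcc L minor] by (simp add: T_def)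
  have xC: "x k \<in> C" if "k \<ge> 1" for k
    using that
  proof (induction k rule: nat_induct_at_least)
    case base then show ?case using x1 by simp
  next
    case (Suc k) then show ?case using xT[of k] TC by simp
  qed
  define \<Phi> where "\<Phi> k = (f (x (k + 1)) + g (x (k + 1))) - (f xstar + g xstar)
       + L * \<alpha>\<^sup>2 / 2 * (norm (x (k + 1) - xstar + (1 / \<alpha> - 1) *\<^sub>R (x (k + 1) - x k)))\<^sup>2" for k
  define \<Phi>0 where "\<Phi>0 = (f (x 1) + g (x 1)) - (f xstar + g xstar) + L * \<alpha>\<^sup>2 / 2 * (norm (x 1 - xstar))\<^sup>2"
  have stp: "f xn + g xn - (f xstar + g xstar) + L * \<alpha>^2 / 2 * (norm (xn - xstar + (1 / \<alpha> - 1) *\<^sub>R (xn - a)))\<^sup>2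
     \<le> (1 - \<rho>) * (f a + g a - (f xstar + g xstar) + L * \<alpha>^2 / 2 * (norm (a - xstar + (1 / \<alpha> - 1) *\<^sub>R (a - p)))\<^sup>2)"
    if "a \<in> C" "yy = a + \<theta> *\<^sub>R (a - p)" "xn = T_L g C gradf L yy" for a yy p xn
    by (rule step[where \<theta>=\<theta> and q=q and ca="g xstar + inner (gradf xstar) xstar" and cb="- gradf xstar"])
      (use grad lip sconv gpcc L minor xstar q_def a0 a1 aq th th2 rho that in auto)
  have claim: "\<Phi> k \<le> (1 - \<rho>) ^ k * \<Phi>0" if "k \<ge> 1" for k
    using that
  proof (induction k rule: nat_induct_at_least)
    case base
    have "\<Phi> 1 \<le> (1 - \<rho>) * \<Phi>0"
      using stp[OF x1, of "y 1" "x 1" "x 2"] xT[of 1] y1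
      by (simp add: \<Phi>_def \<Phi>0_def T_def numeral_2_eq_2)
    then show ?case by simp
  next
    case (Suc k)
    have "\<Phi> (Suc k) \<le> (1 - \<rho>) * \<Phi> k"
      using stp[OF xC[of "k + 1"], of "y (k + 1)" "x k" "x (Suc k + 1)"] xT[of "k + 1"] ystep[of k] Suc.hyps
      by (simp add: \<Phi>_def T_def \<theta>_def)
    also have "\<dots> \<le> (1 - \<rho>) * ((1 - \<rho>) ^ k * \<Phi>0)"
      using Suc.IH rho1 by (intro mult_left_mono) auto
    finally show ?case by simp
  qed
  show ?thesis using claim unfolding \<Phi>_def \<Phi>0_def \<rho>_def \<alpha>_def by blast
qed

end
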